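(* Let $p$ be a prime, let $G$ be a finite $p$-group and let $A$ be a non-empty normal subset of $G$ consisting of elements of order $p$. Assume that for all $a\in A$, $a$ centralizes every elementary abelian $p$-subgroup of $G$ which it normalizes. Then $\langle A\rangle$ is an elementary abelian normal subgroup of $G$.
   Context: A normal subset of $G$ is a subset closed under conjugation by elements of $G$. *)

theory Defs
  imports "HOL-Algebra.Algebra"
begin

definition p_group :: "('a, 'b) monoid_scheme \<Rightarrow> nat \<Rightarrow> bool" where
  "p_group G p \<longleftrightarrow> group G \<and> finite (carrier G) \<and> (\<exists>n. order G = p ^ n)"

definition normal_subset :: "('a, 'b) monoid_scheme \<Rightarrow> 'a set \<Rightarrow> bool" where
  "normal_subset G A \<longleftrightarrow> A \<subseteq> carrier G \<and>
     (\<forall>g\<in>carrier G. \<forall>a\<in>A. g \<otimes>\<^bsub>G\<^esub> a \<otimes>\<^bsub>G\<^esub> inv\<^bsub>G\<^esub> g \<in> A)"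

definition elem_abelian_subgroup :: "('a, 'b) monoid_scheme \<Rightarrow> nat \<Rightarrow> 'a set \<Rightarrow> bool" where
  "elem_abelian_subgroup G p E \<longleftrightarrow> subgroup E G \<and>
     (\<forall>x\<in>E. \<forall>y\<in>E. x \<otimes>\<^bsub>G\<^esub> y = y \<otimes>\<^bsub>G\<^esub> x) \<and>
     (\<forall>x\<in>E. x [^]\<^bsub>G\<^esub> p = \<one>\<^bsub>G\<^esub>)"

definition normalizes :: "('a, 'b) monoid_scheme \<Rightarrow> 'a \<Rightarrow> 'a set \<Rightarrow> bool" where
  "normalizes G a E \<longleftrightarrow> (\<lambda>x. a \<otimes>\<^bsub>G\<^esub> x \<otimes>\<^bsub>G\<^esub> inv\<^bsub>G\<^esub> a) ` E = E"

definition centralizes :: "('a, 'b) monoid_scheme \<Rightarrow> 'a \<Rightarrow> 'a set \<Rightarrow> bool" where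
  "centralizes G a E \<longleftrightarrow> (\<forall>x\<in>E. a \<otimes>\<^bsub>G\<^esub> x = x \<otimes>\<^bsub>G\<^esub> a)"

end

theory Submission
  imports Defs
begin

lemma fixpoint_congruence:
  fixes K (structure) and E :: "'b set" and act :: "'a \<Rightarrow> 'b \<Rightarrow> 'b"
  assumes grp: "group K" and fin: "finite (carrier K)" and ordK: "order K = p ^ n"
    and p: "Factorial_Ring.prime p" and finE: "finite E"
    and cl: "\<And>g x. g \<in> carrier K \<Longrightarrow> x \<in> E \<Longrightarrow> act g x \<in> E"
    and one: "\<And>x. x \<in> E \<Longrightarrow> act \<one> x = x"
    and mult: "\<And>g h x. g \<in> carrier K \<Longrightarrow> h \<in> carrier K \<Longrightarrow> x \<in> E \<Longrightarrow> act (g \<otimes> h) x = act g (act h x)"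
  shows "card E mod p = card {x\<in>E. \<forall>g\<in>carrier K. act g x = x} mod p"
proof -
  interpret group K by fact
  define \<phi> where "\<phi> = (\<lambda>g. \<lambda>x\<in>E. act g x)"
  have bkk1: "act (inv g) (act g x) = x" if "g \<in> carrier K" "x \<in> E" for g x
    using that mult[of "inv g" g x] one by simp
  have bkk2: "act g (act (inv g) x) = x" if "g \<in> carrier K" "x \<in> E" for g x
    using that mult[of g "inv g" x] one by simp
  have bij: "\<phi> g \<in> Bij E" if g: "g \<in> carrier K" for g
  proof -
    have "inj_on (act g) E"
      by (metis bkk1 g inj_on_inverseI)
    moreover have "act g ` E = E"
    proof
      show "act g ` E \<subseteq> E" using cl g by auto
      show "E \<subseteq> act g ` E"
      proof
        fix y assume "y \<in> E"
        then show "y \<in> act g ` E" using bkk2[OF g \<open>y \<in> E\<close>] cl[of "inv g" y] g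
          by (metis image_eqI inv_closed)
      qed
    qed
    ultimately have "bij_betw (act g) E E" by (simp add: bij_betw_def)
    moreover have "bij_betw (\<phi> g) E E = bij_betw (act g) E E"
      by (rule bij_betw_cong) (simp add: \<phi>_def)
    ultimately have "bij_betw (\<phi> g) E E" by simp
    then show ?thesis unfolding Bij_def \<phi>_def by simp
  qed
  have hom: "\<phi> \<in> hom K (BijGroup E)"
  proof (rule homI)
    show "\<phi> x \<in> carrier (BijGroup E)" if "x \<in> carrier K" for x
      using bij that by (simp add: BijGroup_def)
    show "\<phi> (x \<otimes> y) = \<phi> x \<otimes>\<^bsub>BijGroup E\<^esub> \<phi> y" if "x \<in> carrier K" "y \<in> carrier K" for x y
      using that bij by (auto simp: BijGroup_def compose_def \<phi>_def mult cl intro!: ext)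
  qed
  interpret A: group_action K E \<phi>
    unfolding group_action_def group_hom_def group_hom_axioms_def
    using hom group_BijGroup grp by blast
  define F where "F = {x\<in>E. \<forall>g\<in>carrier K. act g x = x}"
  have FE: "F \<subseteq> E" unfolding F_def by auto
  have orb_eq: "orbit K \<phi> x = {act g x | g. g \<in> carrier K}" if "x \<in> E" for x
    using that unfolding orbit_def \<phi>_def by auto
  have "card (E - F) = (\<Sum>x\<in>E. (if x \<notin> F then 1 else 0::nat))"
    using finE by (simp add: sum.If_cases Diff_eq[symmetric] set_diff_eq Int_def)
  also have "\<dots> = (\<Sum>orb\<in>orbits K E \<phi>. \<Sum>x\<in>orb. (if x \<notin> F then 1 else 0::nat))"
    using A.disjoint_sum[OF finE, of "\<lambda>x. (if x \<notin> F then 1 else 0::nat)"] by simp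
  finally have cardEF: "card (E - F) = \<dots>" .
  have "p dvd (\<Sum>orb\<in>orbits K E \<phi>. \<Sum>x\<in>orb. (if x \<notin> F then 1 else 0::nat))"
  proof (rule dvd_sum)
    fix orb assume "orb \<in> orbits K E \<phi>"
    then obtain x where x: "x \<in> E" and orb: "orb = orbit K \<phi> x" unfolding orbits_def by auto
    have "card orb * card (stabilizer K \<phi> x) = p ^ n"
      using A.orbit_stabilizer_theorem[OF x] orb ordK by simp
    then have "card orb dvd p ^ n" by (metis dvd_triv_left)
    then obtain i where i: "card orb = p ^ i" using divides_primepow_nat[OF p] by auto
    have orbE: "orb \<subseteq> E" using orb orb_eq[OF x] cl x by auto
    have xo: "x \<in> orb" using A.orbit_refl[OF x] orb by simp
    have finorb: "finite orb" using orbE finE finite_subset by auto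
    show "p dvd (\<Sum>x\<in>orb. (if x \<notin> F then 1 else 0::nat))"
    proof (cases "i = 0")
      case True
      then have "card orb = 1" using i by simp
      then have "orb = {x}" using xo by (metis card_1_singletonE singletonD)
      then have "x \<in> F" unfolding F_def using x orb orb_eq[OF x] by auto
      then show ?thesis using \<open>orb = {x}\<close> by simp
    next
      case False
      have "y \<notin> F" if y: "y \<in> orb" for y
      proof
        assume yF: "y \<in> F"
        have yE: "y \<in> E" using y orbE by auto
        have "x \<in> orbit K \<phi> y" using A.orbit_sym[OF x yE] y orb by simp
        then have "x = y" using yF orb_eq[OF yE] unfolding F_def by auto
        have "orb \<subseteq> {x}"
        proof
          fix z assume "z \<in> orb"
          then obtain g where "g \<in> carrier K" "z = act g x" using orb orb_eq[OF x] by auto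
          then show "z \<in> {x}" using yF \<open>x = y\<close> unfolding F_def by auto
        qed
        then have "card orb \<le> 1" using card_mono[of "{x}" orb] by simp
        moreover have "p ^ i \<ge> p" using False p
          by (simp add: self_le_power prime_gt_0_nat Suc_leI)
        moreover have "p \<ge> 2" using p by (simp add: prime_ge_2_nat)
        ultimately show False using i by simp
      qed
      then have "(\<Sum>x\<in>orb. (if x \<notin> F then 1 else 0::nat)) = card orb" by simp
      then show ?thesis using i False by simp
    qed
  qed
  then have "p dvd card (E - F)" using cardEF by simp
  moreover have "card E = card F + card (E - F)"
    using FE finE by (metis card_Diff_subset finite_subset add_diff_inverse_nat card_mono not_less)
  ultimately show ?thesis unfolding F_def[symmetric] by (metis mod_add_right_eq add.right_neutral dvd_imp_mod_0)
qed

lemma (in group) normalizer_grows: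
  assumes fin: "finite (carrier G)" and H: "subgroup H G" and M: "subgroup M G"
    and MH: "M \<subseteq> H" and MneH: "M \<noteq> H" and cardH: "card H = p ^ k"
    and p: "Factorial_Ring.prime p"
  shows "\<exists>g\<in>H - M. \<forall>m\<in>M. g \<otimes> m \<otimes> inv g \<in> M"
proof -
  let ?GH = "G\<lparr>carrier := H\<rparr>"
  let ?K = "G\<lparr>carrier := M\<rparr>"
  interpret GH: group ?GH using subgroup_imp_group[OF H] .
  have MGH: "subgroup M ?GH" using subgroup_incl[OF M H MH] .
  have Hsub: "H \<subseteq> carrier G" using H subgroup.subset by auto
  have Msub: "M \<subseteq> carrier G" using M subgroup.subset by auto
  have finH: "finite H" using fin Hsub finite_subset by auto
  have finM: "finite M" using fin Msub finite_subset by auto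
  define E where "E = (\<lambda>h. M #> h) ` H"
  have E_eq: "rcosets\<^bsub>?GH\<^esub> M = E" unfolding E_def RCOSETS_def by auto
  have lag: "card E * card M = card H"
    using GH.lagrange[OF MGH] E_eq by (simp add: order_def)
  have Mpos: "card M > 0" using finM M subgroup.one_closed card_gt_0_iff by blast
  have "card M dvd p ^ k" using lag cardH by (metis dvd_triv_right)
  then obtain j where j: "card M = p ^ j" using divides_primepow_nat[OF p] by auto
  have "card E dvd p ^ k" using lag cardH by (metis dvd_triv_left)
  then obtain i where i: "card E = p ^ i" using divides_primepow_nat[OF p] by auto
  have "card M < card H" using MH MneH finH by (simp add: psubset_card_mono psubset_eq)
  then have "card E \<noteq> 1" using lag by auto
  then have "i \<noteq> 0" using i by auto
  then have pE: "p dvd card E" using i by (simp add: dvd_power)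
  define act where "act = (\<lambda>l S. S #> inv l)"
  define F where "F = {S\<in>E. \<forall>l\<in>carrier ?K. act l S = S}"
  have grpK: "group ?K" using subgroup_imp_group[OF M] .
  have finE: "finite E" unfolding E_def using finH by simp
  have Einv: "S \<subseteq> carrier G" if "S \<in> E" for S
    using that r_coset_subset_G[OF Msub] Hsub unfolding E_def by blast
  have "card E mod p = card F mod p"
    unfolding F_def
  proof (rule fixpoint_congruence[OF grpK _ _ p finE])
    show "finite (carrier ?K)" using finM by simp
    show "order ?K = p ^ j" using j by (simp add: order_def)
    show "act g x \<in> E" if "g \<in> carrier ?K" "x \<in> E" for g x
    proof -
      obtain h where h: "h \<in> H" "x = M #> h" using \<open>x \<in> E\<close> unfolding E_def by auto
      have g: "g \<in> M" using that by simp
      have hG: "h \<in> carrier G" "g \<in> carrier G" using h g Hsub Msub by auto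
      have "act g x = M #> (h \<otimes> inv g)" unfolding act_def h(2)
        using coset_mult_assoc[OF Msub hG(1) inv_closed[OF hG(2)]] .
      moreover have "h \<otimes> inv g \<in> H" using h g MH H
        by (meson subgroup.m_closed subgroup.m_inv_closed subsetD)
      ultimately show ?thesis unfolding E_def by auto
    qed
    show "act \<one>\<^bsub>?K\<^esub> x = x" if "x \<in> E" for x
      using Einv[OF that] by (simp add: act_def)
    show "act (g \<otimes>\<^bsub>?K\<^esub> h) x = act g (act h x)" if "g \<in> carrier ?K" "h \<in> carrier ?K" "x \<in> E" for g h x
    proof -
      have gh: "g \<in> carrier G" "h \<in> carrier G" using that Msub by auto
      show ?thesis unfolding act_def using gh Einv[OF that(3)]
        by (simp add: inv_mult_group coset_mult_assoc)
    qed
  qed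
  then have pF: "p dvd card F" using pE by (metis dvd_imp_mod_0 mod_0_imp_dvd)
  have MF: "M \<in> F"
  proof -
    have "M \<in> E" unfolding E_def using H subgroup.one_closed[OF H] Msub
      by (metis coset_mult_one image_eqI)
    moreover have "act l M = M" if "l \<in> M" for l
      unfolding act_def using that M Msub
      by (meson coset_join2 subgroup.m_inv_closed subgroup.mem_carrier)
    ultimately show ?thesis unfolding F_def by simp
  qed
  have finF: "finite F" unfolding F_def using finE by simp
  have "card F \<noteq> 0" using MF finF by auto
  then have "card F \<ge> p" using pF by (simp add: dvd_imp_le)
  moreover have "p \<ge> 2" using p by (simp add: prime_ge_2_nat)
  ultimately have "card F \<ge> 2" by simp
  then have "\<exists>S\<in>F. S \<noteq> M"
    by (metis MF One_nat_def card_1_singletonE card_le_Suc0_iff_eq finF not_less_eq_eq numeral_2_eq_2)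
  then obtain S where S: "S \<in> F" "S \<noteq> M" by auto
  then obtain h where h: "h \<in> H" "S = M #> h" unfolding F_def E_def by auto
  have hG: "h \<in> carrier G" using h Hsub by auto
  have hM: "h \<notin> M" using S h M hG coset_join2 by auto
  have "h \<otimes> m \<otimes> inv h \<in> M" if m: "m \<in> M" for m
  proof -
    have mG: "m \<in> carrier G" using m Msub by auto
    have "inv m \<in> carrier ?K" using m M by (simp add: subgroup.m_inv_closed)
    then have "act (inv m) S = S" using S unfolding F_def by auto
    then have "(M #> h) #> m = M #> h" unfolding act_def h(2) using mG by simp
    moreover have "h \<otimes> m \<in> (M #> h) #> m" using hG mG Msub M
      by (simp add: coset_mult_assoc rcos_self)
    ultimately have "h \<otimes> m \<in> M #> h" by simp
    then obtain x where x: "x \<in> M" "h \<otimes> m = x \<otimes> h" unfolding r_coset_def by auto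
    then have "h \<otimes> m \<otimes> inv h = x" using hG mG Msub
      by (metis inv_solve_right m_closed subsetD)
    then show ?thesis using x by simp
  qed
  then show ?thesis using h hM by auto
qed

lemma (in group) conj_mult_aux:
  assumes "x \<in> carrier G" "y \<in> carrier G" "m \<in> carrier G"
  shows "(x \<otimes> y) \<otimes> m \<otimes> inv (x \<otimes> y) = x \<otimes> (y \<otimes> m \<otimes> inv y) \<otimes> inv x"
  using assms by (simp add: inv_mult_group m_assoc)

lemma (in group) conj_surj:
  assumes fin: "finite (carrier G)" and M: "subgroup M G" and g: "g \<in> carrier G"
    and cl: "\<forall>m\<in>M. g \<otimes> m \<otimes> inv g \<in> M" and m: "m \<in> M"
  shows "inv g \<otimes> m \<otimes> g \<in> M"
proof -
  have Msub: "M \<subseteq> carrier G" using M subgroup.subset by auto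
  have finM: "finite M" using fin Msub finite_subset by auto
  have "inj_on (\<lambda>x. g \<otimes> x \<otimes> inv g) M"
  proof (rule inj_onI)
    fix x y assume xy: "x \<in> M" "y \<in> M" "g \<otimes> x \<otimes> inv g = g \<otimes> y \<otimes> inv g"
    then have xG: "x \<in> carrier G" "y \<in> carrier G" using Msub by auto
    from xy(3) have "g \<otimes> x = g \<otimes> y" using xG g by (simp add: r_cancel m_closed)
    then show "x = y" using xG g by simp
  qed
  moreover have "(\<lambda>x. g \<otimes> x \<otimes> inv g) ` M \<subseteq> M" using cl by auto
  ultimately have "(\<lambda>x. g \<otimes> x \<otimes> inv g) ` M = M" using endo_inj_surj finM by blast
  then obtain x where x: "x \<in> M" "m = g \<otimes> x \<otimes> inv g" using m by force
  have xG: "x \<in> carrier G" using x Msub by auto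
  have "inv g \<otimes> m \<otimes> g = x" unfolding x(2) using xG g
    by (metis inv_closed l_inv l_one m_assoc m_closed r_inv r_one)
  then show ?thesis using x by simp
qed

lemma (in group) proper_in_normal:
  assumes fin: "finite (carrier G)" and H: "subgroup H G" and L: "subgroup L G"
    and LH: "L \<subseteq> H" and LneH: "L \<noteq> H" and cardH: "card H = p ^ k"
    and p: "Factorial_Ring.prime p"
  shows "\<exists>M. subgroup M G \<and> L \<subseteq> M \<and> M \<subseteq> H \<and> M \<noteq> H \<and> (\<forall>g\<in>H. \<forall>m\<in>M. g \<otimes> m \<otimes> inv g \<in> M)"
proof -
  define S where "S = {M. subgroup M G \<and> L \<subseteq> M \<and> M \<subseteq> H \<and> M \<noteq> H}"
  have Hsub: "H \<subseteq> carrier G" using H subgroup.subset by auto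
  have "S \<subseteq> Pow H" unfolding S_def by auto
  moreover have "finite H" using fin Hsub finite_subset by blast
  ultimately have finS: "finite S" using finite_subset[OF \<open>S \<subseteq> Pow H\<close>] by simp
  have LS: "L \<in> S" unfolding S_def using L LH LneH by auto
  obtain M where M: "M \<in> S" "L \<subseteq> M" and Mmax: "\<forall>N\<in>S. M \<subseteq> N \<longrightarrow> M = N"
    using finite_has_maximal2[OF finS LS] by auto
  have Mg: "subgroup M G" "M \<subseteq> H" "M \<noteq> H" using M unfolding S_def by auto
  have Msub: "M \<subseteq> carrier G" using Mg subgroup.subset by auto
  have "\<exists>g\<in>H - M. \<forall>m\<in>M. g \<otimes> m \<otimes> inv g \<in> M"
    by (rule normalizer_grows[OF fin H Mg(1) Mg(2) Mg(3) cardH p])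
  then obtain g where g: "g \<in> H - M" "\<forall>m\<in>M. g \<otimes> m \<otimes> inv g \<in> M" by auto
  define N where "N = {x \<in> H. \<forall>m\<in>M. x \<otimes> m \<otimes> inv x \<in> M \<and> inv x \<otimes> m \<otimes> x \<in> M}"
  have gG: "g \<in> carrier G" using g Hsub by auto
  have "\<forall>m\<in>M. inv g \<otimes> m \<otimes> g \<in> M" using conj_surj[OF fin Mg(1) gG g(2)] by blast
  then have gN: "g \<in> N" unfolding N_def using g by blast
  have MN: "M \<subseteq> N"
  proof
    fix x assume x: "x \<in> M"
    have "x \<otimes> m \<otimes> inv x \<in> M \<and> inv x \<otimes> m \<otimes> x \<in> M" if "m \<in> M" for m
      using x that Mg(1) by (meson subgroup.m_closed subgroup.m_inv_closed)
    moreover have "x \<in> H" using x Mg(2) by blast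
    ultimately show "x \<in> N" unfolding N_def by blast
  qed
  have NH: "N \<subseteq> H" unfolding N_def by auto
  have subN: "subgroup N G"
  proof (rule subgroupI)
    show "N \<subseteq> carrier G" using NH Hsub by auto
    show "N \<noteq> {}" using gN by auto
    show "inv a \<in> N" if a: "a \<in> N" for a
    proof -
      have aG: "a \<in> carrier G" using a NH Hsub by auto
      have "inv a \<in> H" using subgroup.m_inv_closed[OF H] a NH by blast
      moreover have "\<forall>m\<in>M. a \<otimes> m \<otimes> inv a \<in> M \<and> inv a \<otimes> m \<otimes> a \<in> M" using a unfolding N_def by blast
      ultimately show ?thesis using aG unfolding N_def by (simp add: inv_inv)
    qed
    show "a \<otimes> b \<in> N" if a: "a \<in> N" and b: "b \<in> N" for a b
    proof -
      have aG: "a \<in> carrier G" and bG: "b \<in> carrier G" using a b NH Hsub by auto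
      have aH: "a \<in> H" and bH: "b \<in> H" using a b NH by auto
      have aP: "a \<otimes> m \<otimes> inv a \<in> M \<and> inv a \<otimes> m \<otimes> a \<in> M" if "m \<in> M" for m
        using a that unfolding N_def by blast
      have bP: "b \<otimes> m \<otimes> inv b \<in> M \<and> inv b \<otimes> m \<otimes> b \<in> M" if "m \<in> M" for m
        using b that unfolding N_def by blast
      have abH: "a \<otimes> b \<in> H" using subgroup.m_closed[OF H aH bH] .
      have P1: "a \<otimes> b \<otimes> m \<otimes> inv (a \<otimes> b) \<in> M" if m: "m \<in> M" for m
      proof -
        have mG: "m \<in> carrier G" using m Msub by auto
        have "b \<otimes> m \<otimes> inv b \<in> M" using bP[OF m] by (rule conjunct1)
        then have "a \<otimes> (b \<otimes> m \<otimes> inv b) \<otimes> inv a \<in> M" using aP by blast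
        then show ?thesis by (simp only: conj_mult_aux[OF aG bG mG])
      qed
      have P2: "inv (a \<otimes> b) \<otimes> m \<otimes> (a \<otimes> b) \<in> M" if m: "m \<in> M" for m
      proof -
        have mG: "m \<in> carrier G" using m Msub by auto
        have "inv a \<otimes> m \<otimes> a \<in> M" using aP[OF m] by (rule conjunct2)
        then have "inv b \<otimes> (inv a \<otimes> m \<otimes> a) \<otimes> b \<in> M" using bP by blast
        moreover have "inv (a \<otimes> b) \<otimes> m \<otimes> (a \<otimes> b) = inv b \<otimes> (inv a \<otimes> m \<otimes> a) \<otimes> b"
          using aG bG mG by (simp add: inv_mult_group m_assoc)
        ultimately show ?thesis by (simp only:)
      qed
      show ?thesis unfolding N_def using abH P1 P2 by blast
    qed
  qed
  have "N = H"
  proof (rule ccontr)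
    assume "N \<noteq> H"
    then have "N \<in> S" unfolding S_def using subN M(2) MN NH by blast
    then have "M = N" using Mmax MN by blast
    then show False using gN g by blast
  qed
  moreover have "\<forall>x\<in>N. \<forall>m\<in>M. x \<otimes> m \<otimes> inv x \<in> M" unfolding N_def by blast
  ultimately have "\<forall>x\<in>H. \<forall>m\<in>M. x \<otimes> m \<otimes> inv x \<in> M" by simp
  then show ?thesis using Mg M(2) by blast
qed

lemma (in group) inv_cancel_left':
  assumes "x \<in> carrier G" "y \<in> carrier G"
  shows "inv x \<otimes> (x \<otimes> y) = y"
  using assms by (simp add: m_assoc[symmetric])

lemma (in group) cent_subgroup:
  assumes T: "T \<subseteq> carrier G"
  shows "subgroup {x \<in> carrier G. \<forall>t\<in>T. x \<otimes> t = t \<otimes> x} G"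
proof (rule subgroupI)
  show "{x \<in> carrier G. \<forall>t\<in>T. x \<otimes> t = t \<otimes> x} \<subseteq> carrier G" by auto
  have "\<one> \<in> {x \<in> carrier G. \<forall>t\<in>T. x \<otimes> t = t \<otimes> x}" using T by auto
  then show "{x \<in> carrier G. \<forall>t\<in>T. x \<otimes> t = t \<otimes> x} \<noteq> {}" by blast
  show "inv a \<in> {x \<in> carrier G. \<forall>t\<in>T. x \<otimes> t = t \<otimes> x}"
    if a: "a \<in> {x \<in> carrier G. \<forall>t\<in>T. x \<otimes> t = t \<otimes> x}" for a
  proof -
    have aG: "a \<in> carrier G" using a by auto
    have "inv a \<otimes> t = t \<otimes> inv a" if t: "t \<in> T" for t
    proof -
      have tG: "t \<in> carrier G" using t T by auto
      have at: "a \<otimes> t = t \<otimes> a" using a t by auto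
      have "inv a \<otimes> t = inv a \<otimes> (t \<otimes> a) \<otimes> inv a" using aG tG by (simp add: m_assoc)
      also have "\<dots> = inv a \<otimes> (a \<otimes> t) \<otimes> inv a" using at by simp
      also have "\<dots> = t \<otimes> inv a" using aG tG by (simp add: m_assoc inv_cancel_left')
      finally show ?thesis .
    qed
    then show ?thesis using aG by auto
  qed
  show "a \<otimes> b \<in> {x \<in> carrier G. \<forall>t\<in>T. x \<otimes> t = t \<otimes> x}"
    if a: "a \<in> {x \<in> carrier G. \<forall>t\<in>T. x \<otimes> t = t \<otimes> x}"
    and b: "b \<in> {x \<in> carrier G. \<forall>t\<in>T. x \<otimes> t = t \<otimes> x}" for a b
  proof -
    have aG: "a \<in> carrier G" and bG: "b \<in> carrier G" using a b by auto
    have "a \<otimes> b \<otimes> t = t \<otimes> (a \<otimes> b)" if t: "t \<in> T" for t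
    proof -
      have tG: "t \<in> carrier G" using t T by auto
      have at: "a \<otimes> t = t \<otimes> a" and bt: "b \<otimes> t = t \<otimes> b" using a b t by auto
      have "a \<otimes> b \<otimes> t = a \<otimes> (b \<otimes> t)" using aG bG tG by (simp add: m_assoc)
      also have "\<dots> = a \<otimes> (t \<otimes> b)" using bt by simp
      also have "\<dots> = (a \<otimes> t) \<otimes> b" using aG bG tG by (simp add: m_assoc)
      also have "\<dots> = (t \<otimes> a) \<otimes> b" using at by simp
      also have "\<dots> = t \<otimes> (a \<otimes> b)" using aG bG tG by (simp add: m_assoc)
      finally show ?thesis .
    qed
    then show ?thesis using aG bG by auto
  qed
qed

lemma (in group) gen_comm:
  assumes S: "S \<subseteq> carrier G" and comm: "\<forall>x\<in>S. \<forall>y\<in>S. x \<otimes> y = y \<otimes> x"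
  shows "\<forall>x\<in>generate G S. \<forall>y\<in>generate G S. x \<otimes> y = y \<otimes> x"
proof -
  have "S \<subseteq> {x \<in> carrier G. \<forall>t\<in>S. x \<otimes> t = t \<otimes> x}" using S comm by auto
  then have g1: "generate G S \<subseteq> {x \<in> carrier G. \<forall>t\<in>S. x \<otimes> t = t \<otimes> x}"
    using generate_subgroup_incl cent_subgroup[OF S] by blast
  have gS: "generate G S \<subseteq> carrier G" using generate_incl[OF S] .
  have "S \<subseteq> {x \<in> carrier G. \<forall>t\<in>generate G S. x \<otimes> t = t \<otimes> x}" using g1 S by auto
  then have "generate G S \<subseteq> {x \<in> carrier G. \<forall>t\<in>generate G S. x \<otimes> t = t \<otimes> x}"
    using generate_subgroup_incl cent_subgroup[OF gS] by blast
  then show ?thesis by auto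
qed

lemma (in group) gen_exp:
  assumes S: "S \<subseteq> carrier G" and comm: "\<forall>x\<in>generate G S. \<forall>y\<in>generate G S. x \<otimes> y = y \<otimes> x"
    and ex: "\<forall>s\<in>S. s [^] (p::nat) = \<one>"
  shows "\<forall>x\<in>generate G S. x [^] p = \<one>"
proof -
  have gS: "generate G S \<subseteq> carrier G" using generate_incl[OF S] .
  have sub: "subgroup (generate G S) G" using generate_is_subgroup[OF S] .
  define Q where "Q = {x \<in> generate G S. x [^] p = \<one>}"
  have "subgroup Q G"
  proof (rule subgroupI)
    show "Q \<subseteq> carrier G" unfolding Q_def using gS by auto
    show "Q \<noteq> {}" unfolding Q_def using subgroup.one_closed[OF sub] by auto
    show "inv a \<in> Q" if a: "a \<in> Q" for a
    proof -
      have aG: "a \<in> carrier G" using a gS unfolding Q_def by auto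
      have "inv a [^] p = \<one>" using a aG unfolding Q_def by (simp add: nat_pow_inv)
      then show ?thesis using a subgroup.m_inv_closed[OF sub] unfolding Q_def by auto
    qed
    show "a \<otimes> b \<in> Q" if a: "a \<in> Q" and b: "b \<in> Q" for a b
    proof -
      have ab: "a \<in> generate G S" "b \<in> generate G S" using a b unfolding Q_def by auto
      have aG: "a \<in> carrier G" and bG: "b \<in> carrier G" using ab gS by auto
      have "(a \<otimes> b) [^] p = a [^] p \<otimes> b [^] p"
        using pow_mult_distrib[OF _ aG bG] comm ab by blast
      also have "\<dots> = \<one>" using a b unfolding Q_def by simp
      finally show ?thesis using subgroup.m_closed[OF sub ab] unfolding Q_def by auto
    qed
  qed
  moreover have "S \<subseteq> Q" unfolding Q_def using ex by (auto intro: generate.incl)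
  ultimately have "generate G S \<subseteq> Q" using generate_subgroup_incl by blast
  then show ?thesis unfolding Q_def by auto
qed

lemma (in group) conj_gen:
  assumes S: "S \<subseteq> carrier G" and g: "g \<in> carrier G"
    and cl: "\<forall>s\<in>S. g \<otimes> s \<otimes> inv g \<in> S"
  shows "\<forall>x\<in>generate G S. g \<otimes> x \<otimes> inv g \<in> generate G S"
proof -
  have sub: "subgroup (generate G S) G" using generate_is_subgroup[OF S] .
  define Q where "Q = {x \<in> carrier G. g \<otimes> x \<otimes> inv g \<in> generate G S}"
  have "subgroup Q G"
  proof (rule subgroupI)
    show "Q \<subseteq> carrier G" unfolding Q_def by auto
    have "g \<otimes> \<one> \<otimes> inv g = \<one>" using g by simp
    then show "Q \<noteq> {}" unfolding Q_def using subgroup.one_closed[OF sub] by force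
    show "inv a \<in> Q" if a: "a \<in> Q" for a
    proof -
      have aG: "a \<in> carrier G" using a unfolding Q_def by auto
      have "inv (g \<otimes> a \<otimes> inv g) = g \<otimes> inv a \<otimes> inv g"
        using aG g by (simp add: inv_mult_group m_assoc)
      moreover have "inv (g \<otimes> a \<otimes> inv g) \<in> generate G S"
        using a subgroup.m_inv_closed[OF sub] unfolding Q_def by auto
      ultimately show ?thesis unfolding Q_def using aG by auto
    qed
    show "a \<otimes> b \<in> Q" if a: "a \<in> Q" and b: "b \<in> Q" for a b
    proof -
      have aG: "a \<in> carrier G" and bG: "b \<in> carrier G" using a b unfolding Q_def by auto
      have "g \<otimes> (a \<otimes> b) \<otimes> inv g = (g \<otimes> a \<otimes> inv g) \<otimes> (g \<otimes> b \<otimes> inv g)"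
        using aG bG g by (simp add: m_assoc inv_cancel_left')
      moreover have "(g \<otimes> a \<otimes> inv g) \<otimes> (g \<otimes> b \<otimes> inv g) \<in> generate G S"
        using a b subgroup.m_closed[OF sub] unfolding Q_def by auto
      ultimately show ?thesis unfolding Q_def using aG bG by auto
    qed
  qed
  moreover have "S \<subseteq> Q" unfolding Q_def using cl S by (auto intro: generate.incl)
  ultimately have "generate G S \<subseteq> Q" using generate_subgroup_incl by blast
  then show ?thesis unfolding Q_def by auto
qed

lemma (in group) conj_image_eq:
  assumes fin: "finite (carrier G)" and B: "B \<subseteq> carrier G" and g: "g \<in> carrier G"
    and cl: "\<forall>x\<in>B. g \<otimes> x \<otimes> inv g \<in> B"
  shows "(\<lambda>x. g \<otimes> x \<otimes> inv g) ` B = B"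
proof -
  have finB: "finite B" using fin B finite_subset by auto
  have "inj_on (\<lambda>x. g \<otimes> x \<otimes> inv g) B"
  proof (rule inj_onI)
    fix x y assume xy: "x \<in> B" "y \<in> B" "g \<otimes> x \<otimes> inv g = g \<otimes> y \<otimes> inv g"
    then have xG: "x \<in> carrier G" "y \<in> carrier G" using B by auto
    from xy(3) have "g \<otimes> x = g \<otimes> y" using xG g by (simp add: r_cancel m_closed)
    then show "x = y" using xG g by simp
  qed
  moreover have "(\<lambda>x. g \<otimes> x \<otimes> inv g) ` B \<subseteq> B" using cl by auto
  ultimately show ?thesis using endo_inj_surj finB by blast
qed

lemma (in group) core_comm:
  assumes fin: "finite (carrier G)" and ordG: "order G = p ^ n" and p: "Factorial_Ring.prime p"
    and AG: "A \<subseteq> carrier G"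
    and Anorm: "\<forall>g\<in>carrier G. \<forall>a\<in>A. g \<otimes> a \<otimes> inv g \<in> A"
    and ordA: "\<forall>a\<in>A. ord a = p"
    and hyp: "\<forall>a\<in>A. \<forall>E. elem_abelian_subgroup G p E \<and> normalizes G a E \<longrightarrow> centralizes G a E"
    and H: "subgroup H G"
  shows "\<forall>a\<in>A \<inter> H. \<forall>b\<in>A \<inter> H. a \<otimes> b = b \<otimes> a"
  using H
proof (induction "card H" arbitrary: H rule: less_induct)
  case less
  have H: "subgroup H G" using less.prems .
  have Hsub: "H \<subseteq> carrier G" using H subgroup.subset by auto
  have finH: "finite H" using fin Hsub finite_subset by auto
  have "card (rcosets H) * card H = p ^ n" using lagrange[OF H] ordG by simp
  then have "card H dvd p ^ n" by (metis dvd_triv_right)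
  then obtain k where cardH: "card H = p ^ k" using divides_primepow_nat[OF p] by auto
  show ?case
  proof (intro ballI)
    fix a b assume a: "a \<in> A \<inter> H" and b: "b \<in> A \<inter> H"
    have aG: "a \<in> carrier G" and bG: "b \<in> carrier G" using a b AG by auto
    define K where "K = generate G {a, b}"
    have subK: "subgroup K G" unfolding K_def using generate_is_subgroup aG bG by auto
    have KH: "K \<subseteq> H" unfolding K_def using generate_subgroup_incl[OF _ H] a b by auto
    have aK: "a \<in> K" and bK: "b \<in> K" unfolding K_def by (auto intro: generate.incl)
    show "a \<otimes> b = b \<otimes> a"
    proof (cases "K = H")
      case False
      then have "card K < card H" using KH finH psubset_card_mono by blast
      then have "\<forall>x\<in>A \<inter> K. \<forall>y\<in>A \<inter> K. x \<otimes> y = y \<otimes> x" using less.hyps[OF _ subK] by blast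
      then show ?thesis using aK bK a b by blast
    next
      case True
      define L where "L = generate G {a}"
      have subL: "subgroup L G" unfolding L_def using generate_is_subgroup aG by auto
      have LH: "L \<subseteq> H" unfolding L_def using generate_subgroup_incl[OF _ H] a by auto
      have aL: "a \<in> L" unfolding L_def by (auto intro: generate.incl)
      show ?thesis
      proof (cases "b \<in> L")
        case True
        have "L \<subseteq> {x \<in> carrier G. \<forall>t\<in>{a}. x \<otimes> t = t \<otimes> x}"
          unfolding L_def using generate_subgroup_incl cent_subgroup[of "{a}"] aG by auto
        then show ?thesis using True by auto
      next
        case False
        then have LneH: "L \<noteq> H" using b by blast
        obtain M where M: "subgroup M G" "L \<subseteq> M" "M \<subseteq> H" "M \<noteq> H"
          and Mn: "\<forall>g\<in>H. \<forall>m\<in>M. g \<otimes> m \<otimes> inv g \<in> M"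
          using proper_in_normal[OF fin H subL LH LneH cardH p] by blast
        have "card M < card H" using M(3,4) finH psubset_card_mono by blast
        then have IHM: "\<forall>x\<in>A \<inter> M. \<forall>y\<in>A \<inter> M. x \<otimes> y = y \<otimes> x" using less.hyps[OF _ M(1)] by blast
        define S where "S = A \<inter> M"
        define B where "B = generate G S"
        have Ssub: "S \<subseteq> carrier G" unfolding S_def using AG by auto
        have Bsub: "B \<subseteq> carrier G" unfolding B_def using generate_incl[OF Ssub] .
        have commB: "\<forall>x\<in>B. \<forall>y\<in>B. x \<otimes> y = y \<otimes> x"
          unfolding B_def using gen_comm[OF Ssub] IHM unfolding S_def by blast
        have "\<forall>s\<in>S. s [^] p = \<one>"
        proof
          fix s assume s: "s \<in> S"
          then have "s \<in> carrier G" "ord s = p" using Ssub ordA unfolding S_def by auto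
          then show "s [^] p = \<one>" using pow_ord_eq_1 by metis
        qed
        then have expB: "\<forall>x\<in>B. x [^] p = \<one>"
          unfolding B_def using gen_exp[OF Ssub] commB unfolding B_def by blast
        have eB: "elem_abelian_subgroup G p B"
          unfolding elem_abelian_subgroup_def using generate_is_subgroup[OF Ssub] commB expB
          unfolding B_def by blast
        have bH: "b \<in> H" using b by auto
        have clb: "\<forall>s\<in>S. b \<otimes> s \<otimes> inv b \<in> S"
          unfolding S_def using Anorm bG Mn bH by blast
        have normB: "\<forall>x\<in>B. b \<otimes> x \<otimes> inv b \<in> B"
          unfolding B_def using conj_gen[OF Ssub bG clb] .
        have "normalizes G b B" unfolding normalizes_def using conj_image_eq[OF fin Bsub bG normB] .
        then have "centralizes G b B" using hyp b eB by blast
        moreover have "a \<in> B" unfolding B_def S_def using a aL M(2) by (auto intro: generate.incl)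
        ultimately have "b \<otimes> a = a \<otimes> b" unfolding centralizes_def by blast
        then show ?thesis by simp
      qed
    qed
  qed
qed

theorem lemma2p4:
  fixes G (structure) and p :: nat and A :: "'a set"
  assumes "Factorial_Ring.prime p"
    and "p_group G p"
    and "normal_subset G A"
    and "A \<noteq> {}"
    and "\<forall>a\<in>A. group.ord G a = p"
    and "\<forall>a\<in>A. \<forall>E. elem_abelian_subgroup G p E \<and> normalizes G a E \<longrightarrow> centralizes G a E"
  shows "elem_abelian_subgroup G p (generate G A) \<and> generate G A \<lhd> G"
proof -
  have grp: "group G" and fin: "finite (carrier G)" and "\<exists>n. order G = p ^ n"
    using assms(2) unfolding p_group_def by auto
  then obtain n where ordG: "order G = p ^ n" by auto
  interpret group G by (rule grp)
  have AG: "A \<subseteq> carrier G" and Anorm: "\<forall>g\<in>carrier G. \<forall>a\<in>A. g \<otimes> a \<otimes> inv g \<in> A"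
    using assms(3) unfolding normal_subset_def by auto
  have "\<forall>a\<in>A \<inter> carrier G. \<forall>b\<in>A \<inter> carrier G. a \<otimes> b = b \<otimes> a"
    using core_comm[OF fin ordG assms(1) AG Anorm assms(5) assms(6) subgroup_self] .
  then have commA: "\<forall>a\<in>A. \<forall>b\<in>A. a \<otimes> b = b \<otimes> a" using AG by blast
  have commB: "\<forall>x\<in>generate G A. \<forall>y\<in>generate G A. x \<otimes> y = y \<otimes> x"
    using gen_comm[OF AG commA] .
  have "\<forall>s\<in>A. s [^] p = \<one>"
  proof
    fix s assume s: "s \<in> A"
    then have "s \<in> carrier G" "ord s = p" using AG assms(5) by auto
    then show "s [^] p = \<one>" using pow_ord_eq_1 by metis
  qed
  then have expB: "\<forall>x\<in>generate G A. x [^] p = \<one>"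
    using gen_exp[OF AG commB] by blast
  have eB: "elem_abelian_subgroup G p (generate G A)"
    unfolding elem_abelian_subgroup_def using generate_is_subgroup[OF AG] commB expB by blast
  have "generate G A \<lhd> G"
    unfolding normal_inv_iff using generate_is_subgroup[OF AG] conj_gen[OF AG] Anorm by blast
  then show ?thesis using eB by blast
qed

end
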